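(* Let $\widehat{\mathbf M}=(\hat{\mathbb X},\hat{\mathbb U},\mathbb Y,\hat x_0,\hat{\mathbf t},\hat h)$ be a gMDP, $\psi$ an scLTL formula with DFA $\mathcal A_\psi=(Q,q_0,\Sigma,F,\tau)$, $\delta\ge0$, $\mu$ a stationary Markov policy on $\widehat{\mathbf M}\otimes\mathcal A_\psi$, and $\hat{\mathbf C}$ the control strategy for $\widehat{\mathbf M}$ corresponding to $\mu$, so that $\mathbb P_{\hat{\mathbf C}\times\widehat{\mathbf M}}(\boldsymbol\omega\models\psi)$ equals the probability that executions of the product under $\mu$ from its initial state reach $\hat{\mathbb X}\times F$. Then for any absorbing set $I$ for $\mu$, $$\mathcal S^\mu_\delta\ \ge\ \mathbb P_{\hat{\mathbf C}\times\widehat{\mathbf M}}(\boldsymbol\omega\models\psi)-\delta\,h\big(I\cup(\hat{\mathbb X}\times F)\big),$$ where $\mathcal S^\mu_\delta:=\max\{\mathbf 1_F(\bar q_0),V^\mu_\infty(\hat x_0,\bar q_0)\}$ with $\bar q_0=\tau(q_0,\mathsf L(\hat h(\hat x_0)))$, $V^\mu_\infty=\lim_{l\to\infty}(\mathbf T^\mu_\delta)^l(0)$, and $h(\cdot)$ denotes the mean hitting time from the initial state of the product.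
   Context: A gMDP $\widehat{\mathbf M}=(\hat{\mathbb X},\hat{\mathbb U},\mathbb Y,\hat x_0,\hat{\mathbf t},\hat h)$: Polish state/input spaces, metric output space $\mathbb Y$, initial state $\hat x_0$, kernel $\hat{\mathbf t}(\cdot\mid\hat x,\hat u)$, measurable output map $\hat h$; output trace $y_t=\hat h(\hat x_t)$. A control strategy is a gMDP reading the state and outputting a distribution over inputs; $\mathbb P_{\hat{\mathbf C}\times\widehat{\mathbf M}}$ is the induced measure on output traces. $\Sigma=2^{\mathsf{AP}}$, $\mathsf L:\mathbb Y\to\Sigma$ measurable labelling, word $\boldsymbol\omega=\mathsf L(y_0)\mathsf L(y_1)\cdots$; $\psi$ scLTL, $\mathcal A_\psi$ a DFA (accepting set $F$, transition $\tau$) accepting exactly the words satisfying $\psi$. Product $\widehat{\mathbf M}\otimes\mathcal A_\psi$: states $\hat{\mathbb X}\times Q$, inputs $\hat{\mathbb U}$, initial state $(\hat x_0,\bar q_0)$, kernel $\bar{\mathbf t}(d\hat x'\times\{q'\}\mid\hat x,q,u)=\mathbf 1_{\{q'\}}(\tau(q,\mathsf L(\hat h(\hat x'))))\hat{\mathbf t}(d\hat x'\mid\hat x,u)$. Stationary Markov policy: universally measurable $\mu:\hat{\mathbb X}\times Q\to\mathcal P(\hat{\mathbb U})$. $\mathbf T^\mu(V)(\hat x,q)=\int\max\{\mathbf 1_F(q'),V(\hat x',q')\}\bar{\mathbf t}(d\hat x'\times\{q'\}\mid\hat x,q,\mu(\hat x,q))$, $\mathbf T^\mu_\delta(V)=\mathbf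 L(\mathbf T^\mu(V)-\delta)$ with $\mathbf L(r)=\min(1,\max(0,r))$. An absorbing set for $\mu$ is $I\subseteq\hat{\mathbb X}\times(Q\setminus F)$ such that, under $\mu$, $\mathbb P[(\hat x_{t+1},q_{t+1})\in I\mid(\hat x_t,q_t)]=1$ whenever $(\hat x_t,q_t)\in I$. For $A\subseteq\hat{\mathbb X}\times Q$, $H_A=\inf\{t\in\mathbb N\cup\{\infty\}:(\hat x_t,q_t)\in A\}$ on executions under $\mu$, and the mean hitting time is $h(A)=\mathbb E[H_A]=\sum_{n\ge1}\mathbb P(H_A\ge n)$. *)

theory Defs
  imports "HOL-Probability.Probability"
begin

definition univ_meas_sets :: "'a measure \<Rightarrow> 'a set set" where
  "univ_meas_sets X =
     {A. \<forall>P. sets P = sets X \<and> prob_space P \<longrightarrow> A \<in> sets (completion P)}"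

definition univ_meas_space :: "'a measure \<Rightarrow> 'a measure" where
  "univ_meas_space X = sigma (space X) (univ_meas_sets X)"

definition prod_step ::
  "('x \<Rightarrow> 'u \<Rightarrow> 'x measure) \<Rightarrow> ('x \<Rightarrow> 'y) \<Rightarrow> ('y \<Rightarrow> 'ap set)
   \<Rightarrow> ('q \<Rightarrow> 'ap set \<Rightarrow> 'q) \<Rightarrow> ('x \<times> 'q \<Rightarrow> 'u measure)
   \<Rightarrow> ('x \<times> 'q \<Rightarrow> ennreal) \<Rightarrow> 'x \<times> 'q \<Rightarrow> ennreal" where
  "prod_step t h L \<tau> \<mu> f s =
     (\<integral>\<^sup>+ u. (\<integral>\<^sup>+ x'. f (x', \<tau> (snd s) (L (h x'))) \<partial>(t (fst s) u)) \<partial>(\<mu> s))"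

definition T_op ::
  "('x \<Rightarrow> 'u \<Rightarrow> 'x measure) \<Rightarrow> ('x \<Rightarrow> 'y) \<Rightarrow> ('y \<Rightarrow> 'ap set)
   \<Rightarrow> ('q \<Rightarrow> 'ap set \<Rightarrow> 'q) \<Rightarrow> 'q set \<Rightarrow> ('x \<times> 'q \<Rightarrow> 'u measure)
   \<Rightarrow> ('x \<times> 'q \<Rightarrow> real) \<Rightarrow> 'x \<times> 'q \<Rightarrow> real" where
  "T_op t h L \<tau> F \<mu> V s =
     enn2real (prod_step t h L \<tau> \<mu>
        (\<lambda>s'. ennreal (max (indicator F (snd s')) (V s'))) s)"

definition clamp01 :: "real \<Rightarrow> real" where
  "clamp01 r = min 1 (max 0 r)"

definition T_delta ::
  "('x \<Rightarrow> 'u \<Rightarrow> 'x measure) \<Rightarrow> ('x \<Rightarrow> 'y) \<Rightarrow> ('y \<Rightarrow> 'ap set)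
   \<Rightarrow> ('q \<Rightarrow> 'ap set \<Rightarrow> 'q) \<Rightarrow> 'q set \<Rightarrow> ('x \<times> 'q \<Rightarrow> 'u measure) \<Rightarrow> real
   \<Rightarrow> ('x \<times> 'q \<Rightarrow> real) \<Rightarrow> 'x \<times> 'q \<Rightarrow> real" where
  "T_delta t h L \<tau> F \<mu> \<delta> V s = clamp01 (T_op t h L \<tau> F \<mu> V s - \<delta>)"

definition V_inf ::
  "('x \<Rightarrow> 'u \<Rightarrow> 'x measure) \<Rightarrow> ('x \<Rightarrow> 'y) \<Rightarrow> ('y \<Rightarrow> 'ap set)
   \<Rightarrow> ('q \<Rightarrow> 'ap set \<Rightarrow> 'q) \<Rightarrow> 'q set \<Rightarrow> ('x \<times> 'q \<Rightarrow> 'u measure) \<Rightarrow> real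
   \<Rightarrow> 'x \<times> 'q \<Rightarrow> real" where
  "V_inf t h L \<tau> F \<mu> \<delta> s = lim (\<lambda>l. ((T_delta t h L \<tau> F \<mu> \<delta>) ^^ l) (\<lambda>_. 0) s)"

(* avoid A n s = P_s(H_A >= n) = P_s(state_k \<notin> A for all k < n) for the product
   chain under mu started in s. *)
fun avoid ::
  "('x \<Rightarrow> 'u \<Rightarrow> 'x measure) \<Rightarrow> ('x \<Rightarrow> 'y) \<Rightarrow> ('y \<Rightarrow> 'ap set)
   \<Rightarrow> ('q \<Rightarrow> 'ap set \<Rightarrow> 'q) \<Rightarrow> ('x \<times> 'q \<Rightarrow> 'u measure)
   \<Rightarrow> ('x \<times> 'q) set \<Rightarrow> nat \<Rightarrow> 'x \<times> 'q \<Rightarrow> ennreal" where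
  "avoid t h L \<tau> \<mu> A 0 s = 1"
| "avoid t h L \<tau> \<mu> A (Suc n) s =
     indicator (- A) s * prod_step t h L \<tau> \<mu> (avoid t h L \<tau> \<mu> A n) s"

(* probability of ever reaching A: P_s(H_A < infinity) = 1 - lim_n P_s(H_A >= n) *)
definition reach_prob ::
  "('x \<Rightarrow> 'u \<Rightarrow> 'x measure) \<Rightarrow> ('x \<Rightarrow> 'y) \<Rightarrow> ('y \<Rightarrow> 'ap set)
   \<Rightarrow> ('q \<Rightarrow> 'ap set \<Rightarrow> 'q) \<Rightarrow> ('x \<times> 'q \<Rightarrow> 'u measure)
   \<Rightarrow> ('x \<times> 'q) set \<Rightarrow> 'x \<times> 'q \<Rightarrow> ennreal" where
  "reach_prob t h L \<tau> \<mu> A s = 1 - (INF n. avoid t h L \<tau> \<mu> A n s)"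

(* mean hitting time h(A) = E[H_A] = sum_{n>=1} P(H_A >= n) *)
definition mean_hit ::
  "('x \<Rightarrow> 'u \<Rightarrow> 'x measure) \<Rightarrow> ('x \<Rightarrow> 'y) \<Rightarrow> ('y \<Rightarrow> 'ap set)
   \<Rightarrow> ('q \<Rightarrow> 'ap set \<Rightarrow> 'q) \<Rightarrow> ('x \<times> 'q \<Rightarrow> 'u measure)
   \<Rightarrow> ('x \<times> 'q) set \<Rightarrow> 'x \<times> 'q \<Rightarrow> ennreal" where
  "mean_hit t h L \<tau> \<mu> A s = (\<Sum>n. avoid t h L \<tau> \<mu> A (Suc n) s)"

definition absorbing ::
  "('x \<Rightarrow> 'u \<Rightarrow> 'x measure) \<Rightarrow> ('x \<Rightarrow> 'y) \<Rightarrow> ('y \<Rightarrow> 'ap set)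
   \<Rightarrow> ('q \<Rightarrow> 'ap set \<Rightarrow> 'q) \<Rightarrow> 'q set \<Rightarrow> ('x \<times> 'q \<Rightarrow> 'u measure)
   \<Rightarrow> ('x \<times> 'q) set \<Rightarrow> bool" where
  "absorbing t h L \<tau> F \<mu> I \<longleftrightarrow>
     I \<subseteq> UNIV \<times> (- F) \<and>
     (\<forall>s\<in>I. prod_step t h L \<tau> \<mu> (indicator I) s = 1)"

end

theory Submission
  imports Defs
begin


lemma um_space[simp]: "space (univ_meas_space M) = space M"
  unfolding univ_meas_space_def by (simp add: space_measure_of_conv)

lemma um_sets_Pow: "space M \<noteq> {} \<Longrightarrow> univ_meas_sets M \<subseteq> Pow (space M)"
proof -
  assume "space M \<noteq> {}"
  then obtain x where x: "x \<in> space M" by auto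
  have P: "prob_space (return M x)" "sets (return M x) = sets M"
    using x by (auto intro: prob_space_return)
  show ?thesis
  proof
    fix A assume "A \<in> univ_meas_sets M"
    then have "A \<in> sets (completion (return M x))" using P unfolding univ_meas_sets_def by auto
    then have "A \<subseteq> space (completion (return M x))" by (rule sets.sets_into_space)
    then show "A \<in> Pow (space M)" by simp
  qed
qed

lemma um_sets_sub:
  assumes "prob_space P" "sets P = sets M"
  shows "sets (univ_meas_space M) \<subseteq> sets (completion P)"
proof (cases "univ_meas_sets M \<subseteq> Pow (space M)")
  case True
  have sp: "space (completion P) = space M" using sets_eq_imp_space_eq[OF assms(2)] by simp
  have "sigma_sets (space M) (univ_meas_sets M) \<subseteq> sets (completion P)"
    using sigma_algebra.sigma_sets_subset[of "space M" "sets (completion P)" "univ_meas_sets M"]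
      assms sp sets.sigma_algebra_axioms[of "completion P"]
    unfolding univ_meas_sets_def by auto
  then show ?thesis using True unfolding univ_meas_space_def by (simp add: sets_measure_of_conv)
next
  case False
  then show ?thesis unfolding univ_meas_space_def
    using sets.empty_sets[of "completion P"] sets.top[of "completion P"] assms(2)
    by (auto simp add: sets_measure_of_conv sets_eq_imp_space_eq[OF assms(2)])
qed

lemma um_sets_eq: "sets (univ_meas_space M) = (if univ_meas_sets M \<subseteq> Pow (space M)
   then sigma_sets (space M) (univ_meas_sets M) else {{}, space M})"
  unfolding univ_meas_space_def by (simp only: sets_measure_of_conv)

lemma um_sets_sup: "sets M \<subseteq> sets (univ_meas_space M)"
proof (cases "univ_meas_sets M \<subseteq> Pow (space M)")
  case True
  have 1: "sets M \<subseteq> univ_meas_sets M" unfolding univ_meas_sets_def by auto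
  have "sets (univ_meas_space M) = sigma_sets (space M) (univ_meas_sets M)"
    using True um_sets_eq[of M] by simp
  then show ?thesis using 1 sigma_sets.Basic by blast
next
  case False
  have "space M = {}"
  proof (rule ccontr)
    assume "space M \<noteq> {}"
    from um_sets_Pow[OF this] False show False by simp
  qed
  then have 1: "sets M \<subseteq> {{}}" using sets.sets_into_space by blast
  have "sets (univ_meas_space M) = {{}, space M}"
    using False um_sets_eq[of M] by simp
  then show ?thesis using 1 by blast
qed

lemma um_measurable_mono:
  assumes f: "f \<in> M \<rightarrow>\<^sub>M N" shows "f \<in> univ_meas_space M \<rightarrow>\<^sub>M N"
proof (rule measurableI)
  show "x \<in> space (univ_meas_space M) \<Longrightarrow> f x \<in> space N" for x
    using measurable_space[OF f] by simp
  show "f -` A \<inter> space (univ_meas_space M) \<in> sets (univ_meas_space M)" if "A \<in> sets N" for A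
    using measurable_sets[OF f that] um_sets_sup[of M] by auto
qed

lemma um_measurableD:
  assumes f: "f \<in> univ_meas_space M \<rightarrow>\<^sub>M N" and P: "prob_space P" "sets P = sets M"
  shows "f \<in> completion P \<rightarrow>\<^sub>M N"
proof (rule measurableI)
  have sp: "space (completion P) = space (univ_meas_space M)"
    using sets_eq_imp_space_eq[OF P(2)] by simp
  show "x \<in> space (completion P) \<Longrightarrow> f x \<in> space N" for x
    using measurable_space[OF f] sp by simp
  show "f -` A \<inter> space (completion P) \<in> sets (completion P)" if "A \<in> sets N" for A
    using measurable_sets[OF f that] um_sets_sub[OF P] sp by auto
qed

lemma um_measurableI:
  assumes "\<And>P. prob_space P \<Longrightarrow> sets P = sets M \<Longrightarrow> f \<in> completion P \<rightarrow>\<^sub>M N"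
  shows "f \<in> univ_meas_space M \<rightarrow>\<^sub>M N"
proof (cases "space M = {}")
  case True
  show ?thesis
  proof (rule measurableI)
    show "x \<in> space (univ_meas_space M) \<Longrightarrow> f x \<in> space N" for x using True by simp
    show "f -` A \<inter> space (univ_meas_space M) \<in> sets (univ_meas_space M)" for A
      using True by simp
  qed
next
  case False
  have ret: "prob_space (return M x)" "sets (return M x) = sets M" if "x \<in> space M" for x
    using that by (auto intro: prob_space_return)
  show ?thesis
  proof (rule measurableI)
    fix x assume "x \<in> space (univ_meas_space M)"
    then have x: "x \<in> space M" by simp
    from assms[OF ret[OF x]] have "f \<in> completion (return M x) \<rightarrow>\<^sub>M N" .
    then show "f x \<in> space N" using x by (auto dest: measurable_space)
  next
    fix A assume A: "A \<in> sets N"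
    have "f -` A \<inter> space M \<in> univ_meas_sets M"
      unfolding univ_meas_sets_def
    proof (safe)
      fix P assume P: "sets P = sets M" "prob_space P"
      have "f -` A \<inter> space (completion P) \<in> sets (completion P)"
        using measurable_sets[OF assms[OF P(2,1)] A] .
      moreover have "space P = space M" using sets_eq_imp_space_eq[OF P(1)] .
      ultimately show "f -` A \<inter> space M \<in> sets (completion P)"
        by simp
    qed
    moreover have "sets (univ_meas_space M) = sigma_sets (space M) (univ_meas_sets M)"
      using um_sets_Pow[OF False] unfolding univ_meas_space_def by (simp add: sets_measure_of_conv)
    ultimately show "f -` A \<inter> space (univ_meas_space M) \<in> sets (univ_meas_space M)"
      by simp
  qed
qed

lemma um_comp:
  assumes psi: "\<psi> \<in> M \<rightarrow>\<^sub>M N" and f: "f \<in> univ_meas_space N \<rightarrow>\<^sub>M K"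
  shows "(\<lambda>x. f (\<psi> x)) \<in> univ_meas_space M \<rightarrow>\<^sub>M K"
proof (rule um_measurableI[where f="\<lambda>x. f (\<psi> x)"])
  fix P assume P: "prob_space P" "sets P = sets M"
  define D where "D = distr P N \<psi>"
  have psiP: "\<psi> \<in> P \<rightarrow>\<^sub>M N" using psi measurable_cong_sets[OF P(2), of N N] by simp
  have D: "prob_space D" "sets D = sets N"
    unfolding D_def using prob_space.prob_space_distr[OF P(1) psiP] by auto
  have fD: "f \<in> completion D \<rightarrow>\<^sub>M K" by (rule um_measurableD[OF f D])
  have psiD: "\<psi> \<in> P \<rightarrow>\<^sub>M D" using psiP measurable_cong_sets[OF refl D(2), of P] by simp
  have "\<psi> \<in> completion P \<rightarrow>\<^sub>M completion D"
  proof (rule completion.measurable_completion2)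
    show "\<psi> \<in> completion P \<rightarrow>\<^sub>M D" using psiD by (rule measurable_completion)
    have "distr (completion P) D \<psi> = distr P D \<psi>" using psiD by (rule distr_completion)
    moreover have "null_sets D \<subseteq> null_sets (distr P D \<psi>)"
    proof
      fix X assume X: "X \<in> null_sets D"
      then have XN: "X \<in> sets N" "X \<in> sets D" "emeasure D X = 0" using D(2) by auto
      have "emeasure (distr P D \<psi>) X = emeasure P (\<psi> -` X \<inter> space P)"
        using emeasure_distr[OF psiD XN(2)] .
      also have "\<dots> = emeasure D X" unfolding D_def using emeasure_distr[OF psiP XN(1)] by simp
      finally have "emeasure (distr P D \<psi>) X = 0" using XN by simp
      moreover have "X \<in> sets (distr P D \<psi>)" using XN by simp
      ultimately show "X \<in> null_sets (distr P D \<psi>)" by (simp add: null_sets_def)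
    qed
    ultimately show "null_sets D \<subseteq> null_sets (distr (completion P) D \<psi>)"
      by simp
  qed
  then show "(\<lambda>x. f (\<psi> x)) \<in> completion P \<rightarrow>\<^sub>M K"
    using fD by (rule measurable_comp[unfolded comp_def])
qed

lemma complete_AE_meas:
  fixes g :: "'a \<Rightarrow> ennreal"
  assumes g': "g' \<in> borel_measurable (completion M)" and ae: "AE x in completion M. g x = g' x"
  shows "g \<in> borel_measurable (completion M)"
proof -
  from ae obtain N where N1: "N \<in> null_sets (completion M)"
     and N2: "{x\<in>space (completion M). \<not> (g x = g' x)} \<subseteq> N"
    unfolding eventually_ae_filter by blast
  note N = N1 N2
  show ?thesis
  proof (rule measurableI)
    fix x assume "x \<in> space (completion M)" then show "g x \<in> space borel" by simp
  next
    fix A :: "ennreal set" assume A: "A \<in> sets borel"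
    have eq: "g -` A \<inter> space (completion M) =
      ((g' -` A \<inter> space (completion M)) - N) \<union> (g -` A \<inter> space (completion M) \<inter> N)"
      using N(2) by auto
    have "g -` A \<inter> space (completion M) \<inter> N \<in> null_sets (completion M)"
      by (rule completion.complete2[OF _ N(1)]) auto
    then have s2: "g -` A \<inter> space (completion M) \<inter> N \<in> sets (completion M)" by auto
    have s1: "(g' -` A \<inter> space (completion M)) - N \<in> sets (completion M)"
      using measurable_sets[OF g' A] N(1) by auto
    show "g -` A \<inter> space (completion M) \<in> sets (completion M)"
      by (subst eq) (rule sets.Un[OF s1 s2])
  qed
qed



lemma completion_prob_space: "prob_space p \<Longrightarrow> prob_space (completion p)"
  by (rule prob_spaceI) (simp add: prob_space.emeasure_space_1)

lemma BS:
  fixes F :: "'a \<times> 'b \<Rightarrow> ennreal" and \<kappa> :: "'a \<Rightarrow> 'b measure"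
  assumes kappa: "\<kappa> \<in> univ_meas_space MZ \<rightarrow>\<^sub>M prob_algebra MY"
    and F: "F \<in> borel_measurable (univ_meas_space (MZ \<Otimes>\<^sub>M MY))"
  shows "(\<lambda>z. \<integral>\<^sup>+y. F (z,y) \<partial>\<kappa> z) \<in> borel_measurable (univ_meas_space MZ)"
proof (rule um_measurableI[where f="\<lambda>z. \<integral>\<^sup>+y. F (z,y) \<partial>\<kappa> z"])
  fix p assume p: "prob_space p" "sets p = sets MZ"
  define C where "C = completion p"
  have spC: "space C = space MZ" unfolding C_def using sets_eq_imp_space_eq[OF p(2)] by simp
  have neC: "space C \<noteq> {}" using prob_space.not_empty[OF p(1)] unfolding C_def by simp
  have probC: "prob_space C" unfolding C_def by (rule completion_prob_space[OF p(1)])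
  have kC: "\<kappa> \<in> C \<rightarrow>\<^sub>M prob_algebra MY" unfolding C_def by (rule um_measurableD[OF kappa p])
  have kS: "\<kappa> \<in> C \<rightarrow>\<^sub>M subprob_algebra MY" by (rule measurable_prob_algebraD[OF kC])
  have idC: "(\<lambda>z. z) \<in> C \<rightarrow>\<^sub>M MZ"
  proof (rule measurableI)
    show "x \<in> space C \<Longrightarrow> x \<in> space MZ" for x using spC by simp
    show "(\<lambda>z. z) -` A \<inter> space C \<in> sets C" if A: "A \<in> sets MZ" for A
    proof -
      have "A \<in> sets p" using A p(2) by simp
      then have "A \<in> sets C" unfolding C_def by simp
      moreover have "A \<subseteq> space C" using sets.sets_into_space[OF A] spC by simp
      ultimately show ?thesis by (simp add: Int_absorb2)
    qed
  qed
  have idpair: "(\<lambda>w. w) \<in> C \<Otimes>\<^sub>M MY \<rightarrow>\<^sub>M MZ \<Otimes>\<^sub>M MY"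
  proof -
    have "(\<lambda>w. (fst w, snd w)) \<in> C \<Otimes>\<^sub>M MY \<rightarrow>\<^sub>M MZ \<Otimes>\<^sub>M MY"
      by (rule measurable_Pair[OF measurable_compose[OF measurable_fst idC] measurable_snd])
    then show ?thesis by simp
  qed
  have pairC: "(\<lambda>(x, y). Pair x y) \<in> C \<Otimes>\<^sub>M MY \<rightarrow>\<^sub>M MZ \<Otimes>\<^sub>M MY"
  proof -
    have "(\<lambda>(x, y). Pair x y) = (\<lambda>w::'a \<times> 'b. w)" by auto
    then show ?thesis using idpair by simp
  qed
  define K where "K z = distr (\<kappa> z) (MZ \<Otimes>\<^sub>M MY) (Pair z)" for z
  have kK: "K \<in> C \<rightarrow>\<^sub>M prob_algebra (MZ \<Otimes>\<^sub>M MY)"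
    unfolding K_def by (rule measurable_distr_prob_space2[OF kC pairC])
  define J where "J = bind C K"
  have Cspace: "C \<in> space (prob_algebra C)" using probC by (simp add: space_prob_algebra)
  have J: "prob_space J" "sets J = sets (MZ \<Otimes>\<^sub>M MY)"
    unfolding J_def using prob_space_bind'[OF Cspace kK] sets_bind'[OF Cspace kK] by auto
  have Fc: "F \<in> borel_measurable (completion J)" by (rule um_measurableD[OF F J])
  obtain F' where F': "F' \<in> borel_measurable J" and ae: "AE w in J. F w = F' w"
    using completion_ex_borel_measurable[OF Fc] by blast
  have F'm: "F' \<in> borel_measurable (MZ \<Otimes>\<^sub>M MY)"
    using F' measurable_cong_sets[OF J(2), of borel borel] by blast
  from ae obtain N where N1: "N \<in> null_sets J"
     and N2: "{w\<in>space J. \<not> (F w = F' w)} \<subseteq> N"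
    unfolding eventually_ae_filter by blast
  have NS: "N \<in> sets (MZ \<Otimes>\<^sub>M MY)" using N1 J(2) by (simp add: null_sets_def)
  have spJ: "space J = space (MZ \<Otimes>\<^sub>M MY)" using sets_eq_imp_space_eq[OF J(2)] .
  have "emeasure J N = (\<integral>\<^sup>+z. emeasure (K z) N \<partial>C)"
    unfolding J_def by (rule emeasure_bind[OF neC measurable_prob_algebraD[OF kK] NS])
  then have int0: "(\<integral>\<^sup>+z. emeasure (K z) N \<partial>C) = 0" using null_setsD1[OF N1] by simp
  have mK: "(\<lambda>z. emeasure (K z) N) \<in> borel_measurable C"
    by (rule measurable_compose[OF measurable_prob_algebraD[OF kK] measurable_emeasure_subprob_algebra[OF NS]])
  have ae0: "AE z in C. emeasure (K z) N = 0"
    using int0 nn_integral_0_iff_AE[OF mK] by simp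
  have aeF: "AE z in C. (AE y in \<kappa> z. F (z,y) = F' (z,y))"
    using ae0
  proof (rule AE_mp[OF _ AE_I2])
    fix z assume z: "z \<in> space C"
    show "emeasure (K z) N = 0 \<longrightarrow> (AE y in \<kappa> z. F (z, y) = F' (z, y))"
    proof
      assume e: "emeasure (K z) N = 0"
      have kz: "\<kappa> z \<in> space (prob_algebra MY)" using measurable_space[OF kC z] .
      then have kzs: "sets (\<kappa> z) = sets MY" by (simp add: space_prob_algebra)
      have zMZ: "z \<in> space MZ" using z spC by simp
      have Pz: "Pair z \<in> \<kappa> z \<rightarrow>\<^sub>M MZ \<Otimes>\<^sub>M MY"
        using measurable_Pair1'[OF zMZ, of MY] measurable_cong_sets[OF kzs, of "MZ \<Otimes>\<^sub>M MY" "MZ \<Otimes>\<^sub>M MY"]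
        by simp
      have "emeasure (K z) N = emeasure (\<kappa> z) (Pair z -` N \<inter> space (\<kappa> z))"
        unfolding K_def by (rule emeasure_distr[OF Pz NS])
      with e have nul: "Pair z -` N \<inter> space (\<kappa> z) \<in> null_sets (\<kappa> z)"
        using measurable_sets[OF Pz NS] by (simp add: null_sets_def)
      have spk: "space (\<kappa> z) = space MY" using sets_eq_imp_space_eq[OF kzs] .
      have "{y \<in> space (\<kappa> z). \<not> (F (z,y) = F' (z,y))} \<subseteq> Pair z -` N \<inter> space (\<kappa> z)"
      proof
        fix y assume y: "y \<in> {y \<in> space (\<kappa> z). \<not> (F (z,y) = F' (z,y))}"
        then have "(z,y) \<in> space J" using spJ spk zMZ by (simp add: space_pair_measure)
        then have "(z,y) \<in> N" using N2 y by blast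
        then show "y \<in> Pair z -` N \<inter> space (\<kappa> z)" using y by simp
      qed
      then show "AE y in \<kappa> z. F (z, y) = F' (z, y)"
        unfolding eventually_ae_filter using nul by blast
    qed
  qed
  define g' where "g' z = (\<integral>\<^sup>+y. F' (z,y) \<partial>\<kappa> z)" for z
  have aeg: "AE z in C. (\<integral>\<^sup>+y. F (z,y) \<partial>\<kappa> z) = g' z"
    using aeF unfolding g'_def by (rule AE_mp[OF _ AE_I2]) (auto intro: nn_integral_cong_AE)
  have F'C: "(\<lambda>(z, y). F' (z, y)) \<in> borel_measurable (C \<Otimes>\<^sub>M MY)"
  proof -
    have "(\<lambda>w. F' w) \<in> borel_measurable (C \<Otimes>\<^sub>M MY)"
      by (rule measurable_compose[OF idpair F'm])
    moreover have "(\<lambda>(z, y). F' (z, y)) = (\<lambda>w. F' w)" by auto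
    ultimately show ?thesis by simp
  qed
  have g'm: "g' \<in> borel_measurable C"
    unfolding g'_def by (rule nn_integral_measurable_subprob_algebra2[OF F'C kS])
  show "(\<lambda>z. \<integral>\<^sup>+y. F (z,y) \<partial>\<kappa> z) \<in> borel_measurable (completion p)"
    using complete_AE_meas[OF g'm[unfolded C_def] aeg[unfolded C_def]] .
qed



locale prodsys =
  fixes t :: "'x::polish_space \<Rightarrow> 'u::polish_space \<Rightarrow> 'x measure"
    and h :: "'x \<Rightarrow> 'y::metric_space"
    and L :: "'y \<Rightarrow> 'ap::finite set"
    and \<tau> :: "'q::finite \<Rightarrow> 'ap set \<Rightarrow> 'q"
    and \<mu> :: "'x \<times> 'q \<Rightarrow> 'u measure"
  assumes kernel: "(\<lambda>(x, u). t x u) \<in> measurable (borel \<Otimes>\<^sub>M borel) (prob_algebra borel)"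
    and h_meas: "h \<in> borel_measurable borel"
    and L_meas: "L \<in> measurable borel (count_space UNIV)"
    and policy: "\<mu> \<in> measurable (univ_meas_space (borel \<Otimes>\<^sub>M count_space UNIV))
                          (prob_algebra borel)"
begin

abbreviation SS :: "('x \<times> 'q) measure" where "SS \<equiv> borel \<Otimes>\<^sub>M count_space UNIV"
abbreviation UM :: "('x \<times> 'q) measure" where "UM \<equiv> univ_meas_space SS"
abbreviation P where "P \<equiv> prod_step t h L \<tau> \<mu>"

lemma t_prob: "prob_space (t x u)" "sets (t x u) = sets borel"
proof -
  have "(\<lambda>(x, u). t x u) (x, u) \<in> space (prob_algebra borel)"
    using measurable_space[OF kernel, of "(x,u)"] by (simp add: space_pair_measure)
  then show "prob_space (t x u)" "sets (t x u) = sets borel" by (auto simp: space_prob_algebra)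
qed

lemma mu_prob: "prob_space (\<mu> s)" "sets (\<mu> s) = sets borel"
proof -
  have "\<mu> s \<in> space (prob_algebra borel)"
    using measurable_space[OF policy, of s] by (simp add: space_pair_measure)
  then show "prob_space (\<mu> s)" "sets (\<mu> s) = sets borel" by (auto simp: space_prob_algebra)
qed

lemma P_mono: "(\<And>s'. f s' \<le> g s') \<Longrightarrow> P f s \<le> P g s"
  unfolding prod_step_def by (intro nn_integral_mono) auto

lemma P_const: "P (\<lambda>_. c) s = c"
  unfolding prod_step_def
  by (simp add: prob_space.emeasure_space_1[OF t_prob(1)] prob_space.emeasure_space_1[OF mu_prob(1)])

lemma step_meas: "(\<lambda>(w, x'). (x', \<tau> (snd (fst w)) (L (h x'))))
   \<in> (SS \<Otimes>\<^sub>M (borel::'u measure)) \<Otimes>\<^sub>M borel \<rightarrow>\<^sub>M SS"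
proof -
  have Lh: "(\<lambda>v. L (h v)) \<in> borel \<rightarrow>\<^sub>M count_space UNIV"
    using measurable_compose[OF h_meas L_meas] .
  have 2: "(\<lambda>v::(('x \<times> 'q) \<times> 'u) \<times> 'x. \<tau> (snd (fst (fst v))) (L (h (snd v))))
     \<in> (SS \<Otimes>\<^sub>M (borel::'u measure)) \<Otimes>\<^sub>M borel \<rightarrow>\<^sub>M count_space UNIV"
  proof (rule measurable_compose_countable[where f="\<lambda>q v. \<tau> q (L (h (snd v)))"])
    fix q :: 'q
    have "(\<lambda>v::(('x \<times> 'q) \<times> 'u) \<times> 'x. L (h (snd v))) \<in> (SS \<Otimes>\<^sub>M (borel::'u measure)) \<Otimes>\<^sub>M borel \<rightarrow>\<^sub>M count_space UNIV"
      using measurable_compose[OF measurable_snd Lh] .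
    then show "(\<lambda>v::(('x \<times> 'q) \<times> 'u) \<times> 'x. \<tau> q (L (h (snd v)))) \<in> (SS \<Otimes>\<^sub>M (borel::'u measure)) \<Otimes>\<^sub>M borel \<rightarrow>\<^sub>M count_space UNIV"
      using measurable_compose[OF _ measurable_count_space[of "\<tau> q" UNIV]] by blast
  next
    show "(\<lambda>v::(('x \<times> 'q) \<times> 'u) \<times> 'x. snd (fst (fst v))) \<in> (SS \<Otimes>\<^sub>M (borel::'u measure)) \<Otimes>\<^sub>M borel \<rightarrow>\<^sub>M count_space UNIV"
      by measurable
  qed
  have "(\<lambda>v::(('x \<times> 'q) \<times> 'u) \<times> 'x. (snd v, \<tau> (snd (fst (fst v))) (L (h (snd v))))) \<in> (SS \<Otimes>\<^sub>M (borel::'u measure)) \<Otimes>\<^sub>M borel \<rightarrow>\<^sub>M SS"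
    by (rule measurable_Pair[OF measurable_snd 2])
  moreover have "(\<lambda>(w, x'). (x', \<tau> (snd (fst w)) (L (h x')))) = (\<lambda>v::(('x \<times> 'q) \<times> 'u) \<times> 'x. (snd v, \<tau> (snd (fst (fst v))) (L (h (snd v)))))"
    by auto
  ultimately show ?thesis by simp
qed

definition G :: "('x \<times> 'q \<Rightarrow> ennreal) \<Rightarrow> ('x \<times> 'q) \<times> 'u \<Rightarrow> ennreal" where
  "G f w = (\<integral>\<^sup>+x'. f (x', \<tau> (snd (fst w)) (L (h x'))) \<partial>t (fst (fst w)) (snd w))"

lemma P_G: "P f s = (\<integral>\<^sup>+u. G f (s, u) \<partial>\<mu> s)"
  unfolding prod_step_def G_def by simp

lemma G_meas:
  assumes f: "f \<in> borel_measurable UM"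
  shows "G f \<in> borel_measurable (univ_meas_space (SS \<Otimes>\<^sub>M (borel::'u measure)))"
proof -
  have k1: "(\<lambda>w::('x \<times> 'q) \<times> 'u. (fst (fst w), snd w)) \<in> SS \<Otimes>\<^sub>M borel \<rightarrow>\<^sub>M borel \<Otimes>\<^sub>M borel"
    by measurable
  have "(\<lambda>w::('x \<times> 'q) \<times> 'u. (\<lambda>(x, u). t x u) (fst (fst w), snd w)) \<in> SS \<Otimes>\<^sub>M borel \<rightarrow>\<^sub>M prob_algebra borel"
    by (rule measurable_compose[OF k1 kernel])
  then have k: "(\<lambda>w::('x \<times> 'q) \<times> 'u. t (fst (fst w)) (snd w)) \<in> univ_meas_space (SS \<Otimes>\<^sub>M borel) \<rightarrow>\<^sub>M prob_algebra borel"
    by (intro um_measurable_mono) simp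
  have F: "(\<lambda>v. f ((\<lambda>(w, x'). (x', \<tau> (snd (fst w)) (L (h x')))) v)) \<in> borel_measurable (univ_meas_space ((SS \<Otimes>\<^sub>M (borel::'u measure)) \<Otimes>\<^sub>M borel))"
    by (rule um_comp[OF step_meas f])
  have "(\<lambda>z. \<integral>\<^sup>+y. (\<lambda>v. f ((\<lambda>(w, x'). (x', \<tau> (snd (fst w)) (L (h x')))) v)) (z,y) \<partial>(t (fst (fst z)) (snd z)))
     \<in> borel_measurable (univ_meas_space (SS \<Otimes>\<^sub>M (borel::'u measure)))"
    by (rule BS[OF k F])
  then show ?thesis unfolding G_def[abs_def] by simp
qed

lemma P_meas:
  assumes f: "f \<in> borel_measurable UM"
  shows "P f \<in> borel_measurable UM"
proof -
  have F: "(\<lambda>v. G f v) \<in> borel_measurable (univ_meas_space (SS \<Otimes>\<^sub>M (borel::'u measure)))"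
    using G_meas[OF f] by simp
  have "(\<lambda>z. \<integral>\<^sup>+y. G f (z,y) \<partial>\<mu> z) \<in> borel_measurable UM"
    by (rule BS[OF policy F])
  then show ?thesis unfolding P_G[abs_def] by simp
qed

lemma int_completion_add:
  assumes M: "prob_space M" "sets M = sets (N::'a measure)"
    and f: "f \<in> borel_measurable (univ_meas_space N)" and g: "g \<in> borel_measurable (univ_meas_space N)"
  shows "(\<integral>\<^sup>+x. f x + g x \<partial>M) = (\<integral>\<^sup>+x. f x \<partial>M) + (\<integral>\<^sup>+x. g x \<partial>M)"
proof -
  have fc: "f \<in> borel_measurable (completion M)" by (rule um_measurableD[OF f M])
  have gc: "g \<in> borel_measurable (completion M)" by (rule um_measurableD[OF g M])
  show ?thesis
    using nn_integral_add[OF fc gc] by (simp add: nn_integral_completion)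
qed

lemma int_completion_cmult:
  assumes M: "prob_space M" "sets M = sets (N::'a measure)"
    and f: "f \<in> borel_measurable (univ_meas_space N)"
  shows "(\<integral>\<^sup>+x. c * f x \<partial>M) = c * (\<integral>\<^sup>+x. f x \<partial>M)"
proof -
  have fc: "f \<in> borel_measurable (completion M)" by (rule um_measurableD[OF f M])
  show ?thesis
    using nn_integral_cmult[OF fc, of c] by (simp add: nn_integral_completion)
qed

lemma inner_meas:
  assumes f: "f \<in> borel_measurable UM"
  shows "(\<lambda>x'. f (x', \<tau> q (L (h x')))) \<in> borel_measurable (univ_meas_space borel)"
proof -
  have "(\<lambda>x'. (x', \<tau> q (L (h x')))) \<in> borel \<rightarrow>\<^sub>M SS"
  proof (rule measurable_Pair)
    show "(\<lambda>x'. x') \<in> borel \<rightarrow>\<^sub>M borel" by simp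
    show "(\<lambda>x'. \<tau> q (L (h x'))) \<in> borel \<rightarrow>\<^sub>M count_space UNIV"
      using measurable_compose[OF measurable_compose[OF h_meas L_meas] measurable_count_space[of "\<tau> q" UNIV]] .
  qed
  then show ?thesis by (rule um_comp[OF _ f])
qed

lemma outer_meas:
  assumes f: "f \<in> borel_measurable UM"
  shows "(\<lambda>u. G f (s, u)) \<in> borel_measurable (univ_meas_space borel)"
proof -
  have "(\<lambda>u. (s, u)) \<in> (borel::'u measure) \<rightarrow>\<^sub>M SS \<Otimes>\<^sub>M borel"
    by (rule measurable_Pair1') (simp add: space_pair_measure)
  then show ?thesis by (rule um_comp[OF _ G_meas[OF f]])
qed

lemma G_add:
  assumes f: "f \<in> borel_measurable UM" and g: "g \<in> borel_measurable UM"
  shows "G (\<lambda>s. f s + g s) w = G f w + G g w"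
  unfolding G_def
  by (rule int_completion_add[OF t_prob inner_meas[OF f] inner_meas[OF g]])

lemma P_add:
  assumes f: "f \<in> borel_measurable UM" and g: "g \<in> borel_measurable UM"
  shows "P (\<lambda>s. f s + g s) s = P f s + P g s"
  unfolding P_G G_add[OF f g]
  by (rule int_completion_add[OF mu_prob outer_meas[OF f] outer_meas[OF g]])

lemma G_cmult:
  assumes f: "f \<in> borel_measurable UM"
  shows "G (\<lambda>s. c * f s) w = c * G f w"
  unfolding G_def
  by (rule int_completion_cmult[OF t_prob inner_meas[OF f]])

lemma P_cmult:
  assumes f: "f \<in> borel_measurable UM"
  shows "P (\<lambda>s. c * f s) s = c * P f s"
  unfolding P_G G_cmult[OF f]
  by (rule int_completion_cmult[OF mu_prob outer_meas[OF f]])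

lemma P_sum:
  fixes n :: nat
  assumes f: "\<And>i. f i \<in> borel_measurable UM"
  shows "P (\<lambda>s. \<Sum>i<n. f i s) s = (\<Sum>i<n. P (f i) s)"
proof (induction n)
  case 0
  then show ?case using P_const[of 0 s] by simp
next
  case (Suc n)
  have m: "(\<lambda>s. \<Sum>i<n. f i s) \<in> borel_measurable UM"
    using f by (intro borel_measurable_sum) auto
  have "P (\<lambda>s. \<Sum>i<Suc n. f i s) s = P (\<lambda>s. (\<Sum>i<n. f i s) + f n s) s" by simp
  also have "\<dots> = P (\<lambda>s. \<Sum>i<n. f i s) s + P (f n) s"
    using P_add[OF m f[of n]] by simp
  finally show ?case using Suc by simp
qed

end



context prodsys
begin

lemma avoid_anti:
  assumes "A \<subseteq> B"
  shows "avoid t h L \<tau> \<mu> B n s \<le> avoid t h L \<tau> \<mu> A n s"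
proof (induction n arbitrary: s)
  case 0
  then show ?case by simp
next
  case (Suc n)
  have i: "indicator (-B) s \<le> (indicator (-A) s :: ennreal)"
    using assms by (auto simp: indicator_def)
  have p: "P (avoid t h L \<tau> \<mu> B n) s \<le> P (avoid t h L \<tau> \<mu> A n) s"
    by (rule P_mono) (rule Suc.IH)
  show ?case using mult_mono[OF i p] by simp
qed

lemma space_UM: "space UM = UNIV"
  by (simp add: space_pair_measure)

lemma avoid_meas:
  assumes A: "A \<in> sets UM"
  shows "avoid t h L \<tau> \<mu> A n \<in> borel_measurable UM"
proof (induction n)
  case 0
  then show ?case by simp
next
  case (Suc n)
  have "-A \<in> sets UM" using sets.compl_sets[OF A] space_UM by (simp add: Compl_eq_Diff_UNIV)
  then have [measurable]: "indicator (-A) \<in> (borel_measurable UM :: ('x \<times> 'q \<Rightarrow> ennreal) set)"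
    by (rule borel_measurable_indicator)
  have [measurable]: "P (avoid t h L \<tau> \<mu> A n) \<in> borel_measurable UM"
    by (rule P_meas[OF Suc.IH])
  have "(\<lambda>s. indicator (-A) s * P (avoid t h L \<tau> \<mu> A n) s) \<in> borel_measurable UM"
    by measurable
  then show ?case by simp
qed

lemma main:
  assumes delta: "\<delta> \<ge> 0" and absorb: "absorbing t h L \<tau> F \<mu> I"
  shows "reach_prob t h L \<tau> \<mu> (UNIV \<times> F) s0 \<le>
    ennreal (max (indicator F (snd s0)) (V_inf t h L \<tau> F \<mu> \<delta> s0))
      + ennreal \<delta> * mean_hit t h L \<tau> \<mu> (I \<union> UNIV \<times> F) s0"
proof -
  define W where "W = (\<lambda>l. (T_delta t h L \<tau> F \<mu> \<delta> ^^ l) (\<lambda>_. 0))"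
  have W0: "W 0 s = 0" for s unfolding W_def by simp
  have WS: "W (Suc l) s = clamp01 (T_op t h L \<tau> F \<mu> (W l) s - \<delta>)" for l s
    unfolding W_def by (simp add: T_delta_def)
  have Wb: "0 \<le> W l s \<and> W l s \<le> 1" for l s
    by (cases l) (auto simp: W0 WS clamp01_def)
  define f where "f = (\<lambda>l s. ennreal (max (indicator F (snd s)) (W l s)))"
  have f_le1: "f l s \<le> 1" for l s
    using Wb[of l s] unfolding f_def by (auto simp: indicator_def)
  have Pf_le1: "P (f l) s \<le> 1" for l s
    using P_mono[of "f l" "\<lambda>_. 1" s] f_le1 P_const[of 1 s] by simp
  have T_eq: "ennreal (T_op t h L \<tau> F \<mu> (W l) s) = P (f l) s" for l s
  proof -
    have "P (f l) s < top" using Pf_le1[of l s] by (simp add: le_less_trans)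
    then show ?thesis unfolding T_op_def f_def by simp
  qed
  have T_le1: "T_op t h L \<tau> F \<mu> (W l) s \<le> 1" for l s
    using Pf_le1[of l s] unfolding T_eq[of l s, symmetric] by simp
  have T_ge0: "0 \<le> T_op t h L \<tau> F \<mu> (W l) s" for l s
    unfolding T_op_def by simp
  have Wmono: "W l s \<le> W (Suc l) s" for l s
  proof (induction l arbitrary: s)
    case 0
    then show ?case using Wb[of "Suc 0" s] by (simp add: W0)
  next
    case (Suc l)
    have "f l s' \<le> f (Suc l) s'" for s'
      unfolding f_def using Suc.IH[of s'] by (auto intro!: ennreal_leI)
    then have "P (f l) s \<le> P (f (Suc l)) s" by (rule P_mono)
    then have "ennreal (T_op t h L \<tau> F \<mu> (W l) s) \<le> ennreal (T_op t h L \<tau> F \<mu> (W (Suc l)) s)"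
      by (simp only: T_eq)
    then have "T_op t h L \<tau> F \<mu> (W l) s \<le> T_op t h L \<tau> F \<mu> (W (Suc l)) s"
      using T_ge0 by simp
    then show ?case unfolding WS by (auto simp: clamp01_def)
  qed
  have W_le_V: "W l s \<le> V_inf t h L \<tau> F \<mu> \<delta> s" for l s
  proof -
    have bdd: "bdd_above (range (\<lambda>l. W l s))"
      using Wb by (intro bdd_aboveI[of _ 1]) blast
    have inc: "incseq (\<lambda>l. W l s)" using Wmono by (simp add: incseq_SucI)
    have "(\<lambda>l. W l s) \<longlonglongrightarrow> (SUP l. W l s)" by (rule LIMSEQ_incseq_SUP[OF bdd inc])
    then have "V_inf t h L \<tau> F \<mu> \<delta> s = (SUP l. W l s)"
      unfolding V_inf_def W_def by (rule limI)
    then show ?thesis using cSUP_upper[OF _ bdd, of l] by simp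
  qed
  have ind_meas: "(\<lambda>s. indicator F (snd s) :: real) \<in> borel_measurable UM"
  proof -
    have "(\<lambda>s. indicator F (snd s) :: real) \<in> borel_measurable SS" by measurable
    then show ?thesis by (rule um_measurable_mono)
  qed
  have fW_meas: "W l \<in> borel_measurable UM \<and> f l \<in> borel_measurable UM" for l
  proof (induction l)
    case 0
    have "W 0 = (\<lambda>_. 0)" by (rule ext) (simp add: W0)
    then have [measurable]: "W 0 \<in> borel_measurable UM" by simp
    note ind_meas[measurable]
    have "f 0 \<in> borel_measurable UM" unfolding f_def by measurable
    then show ?case using W0 by simp
  next
    case (Suc l)
    then have [measurable]: "f l \<in> borel_measurable UM" by simp
    have [measurable]: "P (f l) \<in> borel_measurable UM" by (rule P_meas) simp
    have eqW: "W (Suc l) = (\<lambda>s. min 1 (max 0 (enn2real (P (f l) s) - \<delta>)))"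
      by (rule ext) (simp add: WS clamp01_def T_op_def f_def)
    have [measurable]: "W (Suc l) \<in> borel_measurable UM" unfolding eqW by measurable
    note ind_meas[measurable]
    have "f (Suc l) \<in> borel_measurable UM" unfolding f_def by measurable
    then show ?case by simp
  qed
  have W_meas: "W l \<in> borel_measurable UM" and f_meas: "f l \<in> borel_measurable UM" for l
    using fW_meas by auto
  define a where "a = avoid t h L \<tau> \<mu> (UNIV \<times> F)"
  have a0: "a 0 = (\<lambda>_. 1)" unfolding a_def by (rule ext) simp
  have aS: "a (Suc n) s = indicator (-(UNIV \<times> F)) s * P (a n) s" for n s
    unfolding a_def by simp
  have a_le1: "a n s \<le> 1" for n s
  proof (induction n arbitrary: s)
    case 0 then show ?case by (simp add: a0)
  next
    case (Suc n)
    have "P (a n) s \<le> 1" using P_mono[of "a n" "\<lambda>_. 1" s] Suc.IH P_const[of 1 s] by simp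
    then show ?case unfolding aS by (auto simp: indicator_def)
  qed
  have UF_sets: "UNIV \<times> F \<in> sets UM"
    using um_sets_sup[of SS] by (auto intro!: pair_measureI)
  have a_meas: "a n \<in> borel_measurable UM" for n
    unfolding a_def by (rule avoid_meas[OF UF_sets])
  have Isub: "I \<subseteq> UNIV \<times> (- F)" and Iabs: "\<And>s. s \<in> I \<Longrightarrow> P (indicator I) s = 1"
    using absorb unfolding absorbing_def by auto
  have a_I: "s \<in> I \<Longrightarrow> a n s = 1" for n s
  proof (induction n arbitrary: s)
    case 0 then show ?case by (simp add: a0)
  next
    case (Suc n)
    have "indicator I s' \<le> a n s'" for s'
      using Suc.IH[of s'] by (cases "s' \<in> I") auto
    then have "P (indicator I) s \<le> P (a n) s" by (rule P_mono)
    then have ge: "1 \<le> P (a n) s" using Iabs[OF Suc.prems] by simp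
    have le: "P (a n) s \<le> 1" using P_mono[of "a n" "\<lambda>_. 1" s] a_le1 P_const[of 1 s] by simp
    have "s \<notin> UNIV \<times> F" using Isub Suc.prems by auto
    moreover have "P (a n) s = 1" by (rule antisym[OF le ge])
    ultimately show ?case unfolding aS by (cases s) (auto simp: indicator_def)
  qed
  define Z where "Z = {s. \<forall>n. a n s = 1}"
  have IZ: "I \<subseteq> Z" unfolding Z_def using a_I by auto
  have Z_sets: "Z \<in> sets UM"
  proof -
    have mi: "a n -` {1} \<inter> space UM \<in> sets UM" for n
      by (rule measurable_sets[OF a_meas]) simp
    have "Z = (\<Inter>n\<in>UNIV. a n -` {1} \<inter> space UM)" unfolding Z_def space_UM by auto
    also have "\<dots> \<in> sets UM"
      using mi by (intro sets.countable_INT) auto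
    finally show ?thesis .
  qed
  define A' where "A' = Z \<union> UNIV \<times> F"
  have A'_sets: "A' \<in> sets UM" unfolding A'_def using Z_sets UF_sets by auto
  define b where "b = avoid t h L \<tau> \<mu> A'"
  have b0: "b 0 = (\<lambda>_. 1)" unfolding b_def by (rule ext) simp
  have b_meas: "b n \<in> borel_measurable UM" for n
    unfolding b_def by (rule avoid_meas[OF A'_sets])
  have bS: "s \<notin> A' \<Longrightarrow> b (Suc k) s = P (b k) s" for k s
    unfolding b_def by simp
  have b1: "s \<notin> A' \<Longrightarrow> b (Suc 0) s = 1" for s
    using bS[of s 0] by (simp add: b0 P_const)
  define B where "B = (\<lambda>l s. \<Sum>k<l. b (Suc k) s)"
  have B_meas: "B l \<in> borel_measurable UM" for l
    unfolding B_def using b_meas by (intro borel_measurable_sum) auto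
  have B_Suc: "s \<notin> A' \<Longrightarrow> B (Suc l) s = 1 + P (B l) s" for l s
  proof -
    assume s: "s \<notin> A'"
    have "B (Suc l) s = b (Suc 0) s + (\<Sum>k<l. b (Suc (Suc k)) s)"
      unfolding B_def by (rule sum.lessThan_Suc_shift)
    also have "\<dots> = 1 + (\<Sum>k<l. P (b (Suc k)) s)" using b1[OF s] bS[OF s] by simp
    also have "(\<Sum>k<l. P (b (Suc k)) s) = P (\<lambda>s. \<Sum>k<l. b (Suc k) s) s"
      using P_sum[of "\<lambda>k. b (Suc k)" l s] b_meas by simp
    finally show ?thesis unfolding B_def by simp
  qed
  have inv: "1 \<le> f l s + ennreal \<delta> * B l s + a (Suc l) s" for l s
  proof (induction l arbitrary: s)
    case 0
    have "a (Suc 0) s = indicator (-(UNIV \<times> F)) s" unfolding aS a0 P_const by simp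
    then show ?case by (cases s; cases "snd s \<in> F") (auto simp: f_def W0 B_def indicator_def)
  next
    case (Suc l)
    show ?case
    proof (cases "snd s \<in> F \<or> s \<in> Z")
      case True
      show ?thesis
      proof (cases "snd s \<in> F")
        case True
        then have "f (Suc l) s = 1" unfolding f_def using Wb[of "Suc l" s] by simp
        then show ?thesis by (simp add: add.assoc)
      next
        case False
        then have "s \<in> Z" using \<open>snd s \<in> F \<or> s \<in> Z\<close> by simp
        then have "a (Suc (Suc l)) s = 1" unfolding Z_def by simp
        then show ?thesis by simp
      qed
    next
      case False
      then have sA: "s \<notin> A'" and sF: "s \<notin> UNIV \<times> F" unfolding A'_def by auto
      have aSS: "a (Suc (Suc l)) s = P (a (Suc l)) s" unfolding aS[of "Suc l" s] using sF by (cases s) (auto simp: indicator_def)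
      have m1[measurable]: "f l \<in> borel_measurable UM" "B l \<in> borel_measurable UM"
          "a (Suc l) \<in> borel_measurable UM"
        using f_meas B_meas a_meas by auto
      have m2: "(\<lambda>s'. f l s' + ennreal \<delta> * B l s') \<in> borel_measurable UM" by measurable
      have m3: "(\<lambda>s'. ennreal \<delta> * B l s') \<in> borel_measurable UM" by measurable
      have Wpart: "P (f l) s \<le> ennreal (W (Suc l) s) + ennreal \<delta>"
      proof -
        let ?T = "T_op t h L \<tau> F \<mu> (W l) s"
        have "?T - \<delta> \<le> 1" using T_le1[of l s] delta by simp
        then have "?T \<le> W (Suc l) s + \<delta>" unfolding WS clamp01_def by auto
        then have "ennreal ?T \<le> ennreal (W (Suc l) s + \<delta>)" by (rule ennreal_leI)
        also have "\<dots> = ennreal (W (Suc l) s) + ennreal \<delta>" using Wb[of "Suc l" s] delta by simp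
        finally show ?thesis using T_eq by simp
      qed
      have fW: "ennreal (W (Suc l) s) \<le> f (Suc l) s" unfolding f_def by (rule ennreal_leI) simp
      have "1 = P (\<lambda>_. 1) s" by (simp add: P_const)
      also have "\<dots> \<le> P (\<lambda>s'. (f l s' + ennreal \<delta> * B l s') + a (Suc l) s') s"
        by (rule P_mono) (rule Suc.IH)
      also have "\<dots> = P (\<lambda>s'. f l s' + ennreal \<delta> * B l s') s + P (a (Suc l)) s"
        by (rule P_add[OF m2 m1(3)])
      also have "P (\<lambda>s'. f l s' + ennreal \<delta> * B l s') s = P (f l) s + P (\<lambda>s'. ennreal \<delta> * B l s') s"
        by (rule P_add[OF m1(1) m3])
      also have "P (\<lambda>s'. ennreal \<delta> * B l s') s = ennreal \<delta> * P (B l) s"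
        by (rule P_cmult[OF m1(2)])
      also have "P (f l) s + ennreal \<delta> * P (B l) s + P (a (Suc l)) s
          \<le> (ennreal (W (Suc l) s) + ennreal \<delta>) + ennreal \<delta> * P (B l) s + P (a (Suc l)) s"
        using Wpart by (simp add: add_right_mono)
      also have "\<dots> = ennreal (W (Suc l) s) + ennreal \<delta> * B (Suc l) s + a (Suc (Suc l)) s"
        unfolding B_Suc[OF sA] aSS by (simp add: distrib_left add.assoc)
      also have "\<dots> \<le> f (Suc l) s + ennreal \<delta> * B (Suc l) s + a (Suc (Suc l)) s"
        using fW by (simp add: add_right_mono)
      finally show ?thesis .
    qed
  qed
  define X where "X = ennreal (max (indicator F (snd s0)) (V_inf t h L \<tau> F \<mu> \<delta> s0))
      + ennreal \<delta> * mean_hit t h L \<tau> \<mu> (I \<union> UNIV \<times> F) s0"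
  have step: "1 \<le> a (Suc l) s0 + X" for l
  proof -
    have fV: "f l s0 \<le> ennreal (max (indicator F (snd s0)) (V_inf t h L \<tau> F \<mu> \<delta> s0))"
      unfolding f_def using W_le_V[of l s0] by (intro ennreal_leI) (auto simp: max_def)
    have "B l s0 \<le> mean_hit t h L \<tau> \<mu> A' s0"
      unfolding B_def mean_hit_def b_def by (rule sum_le_suminf) (auto intro: summableI)
    also have "\<dots> \<le> mean_hit t h L \<tau> \<mu> (I \<union> UNIV \<times> F) s0"
      unfolding mean_hit_def
      using IZ by (intro suminf_le summableI avoid_anti) (auto simp: A'_def)
    finally have "ennreal \<delta> * B l s0 \<le> ennreal \<delta> * mean_hit t h L \<tau> \<mu> (I \<union> UNIV \<times> F) s0"
      by (rule mult_left_mono) simp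
    then have "f l s0 + ennreal \<delta> * B l s0 \<le> X" unfolding X_def using fV by (rule add_mono[rotated])
    then have le: "f l s0 + ennreal \<delta> * B l s0 + a (Suc l) s0 \<le> X + a (Suc l) s0" by (rule add_right_mono)
    have "1 \<le> X + a (Suc l) s0" using order_trans[OF inv[of l s0] le] .
    then show ?thesis by (metis add.commute)
  qed
  have "1 \<le> (INF l. a (Suc l) s0 + X)" using step by (rule INF_greatest)
  also have "\<dots> = (INF l. a (Suc l) s0) + X" by (rule INF_ennreal_add_const)
  also have "(INF l. a (Suc l) s0) = (INF n. a n s0)"
  proof (rule antisym)
    show "(INF n. a n s0) \<le> (INF l. a (Suc l) s0)" by (rule INF_mono) auto
    show "(INF l. a (Suc l) s0) \<le> (INF n. a n s0)"
    proof (rule INF_greatest)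
      fix n show "(INF l. a (Suc l) s0) \<le> a n s0"
      proof (cases n)
        case 0
        have "(INF l. a (Suc l) s0) \<le> a (Suc 0) s0" by (rule INF_lower) simp
        also have "\<dots> \<le> 1" by (rule a_le1)
        finally show ?thesis using 0 by (simp add: a0)
      next
        case (Suc m) then show ?thesis by (auto intro: INF_lower)
      qed
    qed
  qed
  finally have fin: "1 \<le> (INF n. a n s0) + X" .
  have "reach_prob t h L \<tau> \<mu> (UNIV \<times> F) s0 = 1 - (INF n. a n s0)"
    unfolding reach_prob_def a_def by simp
  also have "\<dots> \<le> X" using fin by (simp add: ennreal_minus_le_iff)
  finally show ?thesis unfolding X_def .
qed

end


theorem corollary3:
  fixes t :: "'x::polish_space \<Rightarrow> 'u::polish_space \<Rightarrow> 'x measure"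
    and h :: "'x \<Rightarrow> 'y::metric_space"
    and x0 :: 'x
    and L :: "'y \<Rightarrow> 'ap::finite set"
    and q0 :: "'q::finite"
    and F :: "'q set"
    and \<tau> :: "'q \<Rightarrow> 'ap set \<Rightarrow> 'q"
    and \<mu> :: "'x \<times> 'q \<Rightarrow> 'u measure"
    and \<delta> :: real
    and I :: "('x \<times> 'q) set"
  assumes kernel: "(\<lambda>(x, u). t x u) \<in> measurable (borel \<Otimes>\<^sub>M borel) (prob_algebra borel)"
    and h_meas: "h \<in> borel_measurable borel"
    and L_meas: "L \<in> measurable borel (count_space UNIV)"
    and policy: "\<mu> \<in> measurable (univ_meas_space (borel \<Otimes>\<^sub>M count_space UNIV))
                          (prob_algebra borel)"
    and delta: "\<delta> \<ge> 0"
    and absorb: "absorbing t h L \<tau> F \<mu> I"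
  shows "(let qb0 = \<tau> q0 (L (h x0));
              S = max (indicator F qb0) (V_inf t h L \<tau> F \<mu> \<delta> (x0, qb0))
          in ennreal S + ennreal \<delta> * mean_hit t h L \<tau> \<mu> (I \<union> UNIV \<times> F) (x0, qb0)
               \<ge> reach_prob t h L \<tau> \<mu> (UNIV \<times> F) (x0, qb0))"
proof -
  interpret prodsys t h L \<tau> \<mu>
    using kernel h_meas L_meas policy by unfold_locales
  show ?thesis
    unfolding Let_def using main[OF delta absorb, of "(x0, \<tau> q0 (L (h x0)))"] by simp
qed

end
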